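(* Let $\tau_0\in(0,1)$, $\bar\beta>0$, and define $\tau_{k+1}:=\frac{\tau_k}{2}\big[\sqrt{\tau_k^2+4}-\tau_k\big]$ for $k\ge0$. Let $\beta_1^0=\beta_2^0:=\bar\beta$ and for $k\ge0$ set $\beta_1^{k+1}:=(1-\tau_k)\beta_1^k$, $\beta_2^{k+1}:=\beta_2^k$ if $k$ is even, and $\beta_1^{k+1}:=\beta_1^k$, $\beta_2^{k+1}:=(1-\tau_k)\beta_2^k$ if $k$ is odd. Then for all $k\ge1$, $$\frac{(1-\tau_0)\bar\beta}{2\tau_0k+1}<\beta_1^k<\frac{2\bar\beta\sqrt{1-\tau_0}}{\tau_0k},\qquad \frac{\bar\beta\sqrt{1-\tau_0}}{2\tau_0k+1}<\beta_2^k<\frac{2\bar\beta}{\tau_0k}.$$ *)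

theory Defs
  imports Complex_Main
begin

primrec tau :: "real \<Rightarrow> nat \<Rightarrow> real" where
  "tau t0 0 = t0"
| "tau t0 (Suc k) = tau t0 k / 2 * (sqrt ((tau t0 k)\<^sup>2 + 4) - tau t0 k)"

primrec betas :: "real \<Rightarrow> real \<Rightarrow> nat \<Rightarrow> real \<times> real" where
  "betas t0 b 0 = (b, b)"
| "betas t0 b (Suc k) =
     (if even k then ((1 - tau t0 k) * fst (betas t0 b k), snd (betas t0 b k))
      else (fst (betas t0 b k), (1 - tau t0 k) * snd (betas t0 b k)))"

definition beta1 :: "real \<Rightarrow> real \<Rightarrow> nat \<Rightarrow> real" where
  "beta1 t0 b k = fst (betas t0 b k)"

definition beta2 :: "real \<Rightarrow> real \<Rightarrow> nat \<Rightarrow> real" where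
  "beta2 t0 b k = snd (betas t0 b k)"

end

theory Submission
  imports Defs
begin

lemma step_props:
  fixes t :: real assumes t: "0 < t"
  defines "s \<equiv> t / 2 * (sqrt (t\<^sup>2 + 4) - t)"
  shows "0 < s" "s < t" "s\<^sup>2 = (1 - s) * t\<^sup>2"
proof -
  define q where "q = sqrt (t\<^sup>2 + 4)"
  have q2: "q^2 = t^2 + 4" unfolding q_def by simp
  have q0: "q \<ge> 0" unfolding q_def by simp
  have qt: "q > t" using q2 q0 t by (intro power_less_imp_less_base[of t 2 q]) auto
  have "q^2 < (t+2)^2" using q2 t by (simp add: power2_eq_square algebra_simps)
  then have qt2: "q < t + 2" using t by (intro power_less_imp_less_base[of q 2 "t+2"]) auto
  have s: "s = t * (q - t) / 2" unfolding s_def q_def by simp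
  have "0 < t * (q - t)" using qt t by (simp add: mult_pos_pos)
  then show "0 < s" using s by simp
  have "t * (q - t) < t * 2" using qt2 t by (intro mult_strict_left_mono) auto
  then show "s < t" using s by simp
  have d: "(q-t)^2 = 2*t^2 + 4 - 2*q*t" using q2 by (simp add: power2_diff)
  have "s^2 = t^2*(q-t)^2/4" by (simp add: s power_mult_distrib power_divide)
  also have "\<dots> = t^2*(2*t^2 + 4 - 2*q*t)/4" using d by simp
  also have "\<dots> = (1 - s) * t\<^sup>2" by (simp add: s field_simps power2_eq_square)
  finally show "s\<^sup>2 = (1 - s) * t\<^sup>2" .
qed

lemma tau_props:
  assumes "0 < t0" "t0 < 1"
  shows "0 < tau t0 n \<and> tau t0 n < 1"
  using assms
proof (induction n)
  case 0 then show ?case by simp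
next
  case (Suc n)
  then have h: "0 < tau t0 n" by auto
  have "0 < tau t0 (Suc n)" "tau t0 (Suc n) < tau t0 n"
    unfolding tau.simps by (rule step_props(1)[OF h], rule step_props(2)[OF h])
  moreover have "tau t0 n < 1" using Suc by auto
  ultimately show ?case by linarith
qed

lemma tau_pos: "0 < t0 \<Longrightarrow> t0 < 1 \<Longrightarrow> 0 < tau t0 n"
  using tau_props by blast
lemma tau_lt1: "0 < t0 \<Longrightarrow> t0 < 1 \<Longrightarrow> tau t0 n < 1"
  using tau_props by blast
lemma tau_dec: "0 < t0 \<Longrightarrow> t0 < 1 \<Longrightarrow> tau t0 (Suc n) < tau t0 n"
  unfolding tau.simps by (rule step_props(2)[OF tau_pos])
lemma tau_rel: "0 < t0 \<Longrightarrow> t0 < 1 \<Longrightarrow>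
   (tau t0 (Suc n))\<^sup>2 = (1 - tau t0 (Suc n)) * (tau t0 n)\<^sup>2"
  unfolding tau.simps by (rule step_props(3)[OF tau_pos])

declare tau.simps(2)[simp del]

lemma recip_step:
  fixes u v :: real
  assumes "0 < u" "u < v" "v^2 - v = u^2"
  shows "v \<ge> u + 1/2" "v \<le> u + 1"
proof -
  have e: "(v - u) * (v + u) = v" using assms(3) by (simp add: algebra_simps power2_eq_square)
  show "v \<le> u + 1"
  proof (rule ccontr)
    assume "\<not> ?thesis"
    then have "(v - u) * (v + u) > 1 * (v + u)" using assms by (intro mult_strict_right_mono) auto
    then show False using e assms by simp
  qed
  show "v \<ge> u + 1/2"
  proof (rule ccontr)
    assume "\<not> ?thesis"
    then have "(v - u) * (v + u) < (1/2) * (2 * v)"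
      using assms by (intro mult_strict_mono) auto
    then show False using e by simp
  qed
qed

lemma recip_bounds:
  assumes "0 < t0" "t0 < 1"
  shows "1 / tau t0 n \<ge> 1/t0 + real n / 2 \<and> 1 / tau t0 n \<le> 1/t0 + real n"
proof (induction n)
  case 0 then show ?case by simp
next
  case (Suc n)
  let ?t = "tau t0 n" and ?s = "tau t0 (Suc n)"
  have p: "0 < ?t" "0 < ?s" "?s < ?t" using tau_pos tau_dec assms by auto
  have r: "?s^2 = (1 - ?s) * ?t^2" using tau_rel assms by blast
  have "(1/?s)^2 - 1/?s = (1/?t)^2"
    using p r by (simp add: field_simps power2_eq_square)
  moreover have "1/?t < 1/?s" using p by (simp add: frac_less2)
  moreover have "0 < 1/?t" using p by simp
  ultimately have "1/?s \<ge> 1/?t + 1/2" "1/?s \<le> 1/?t + 1"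
    using recip_step by blast+
  moreover have "real (Suc n)/2 = real n/2 + 1/2" "real (Suc n) = real n + 1" by simp_all
  ultimately show ?case using Suc by linarith
qed

lemma prod_rel:
  assumes "0 < t0" "t0 < 1"
  shows "beta1 t0 b (Suc k) * beta2 t0 b (Suc k) = b^2 * (1 - t0) * (tau t0 k)^2 / t0^2"
proof (induction k)
  case 0 then show ?case using assms by (simp add: beta1_def beta2_def power2_eq_square)
next
  case (Suc k)
  have r: "(tau t0 (Suc k))\<^sup>2 = (1 - tau t0 (Suc k)) * (tau t0 k)\<^sup>2" using tau_rel assms by blast
  have "beta1 t0 b (Suc (Suc k)) * beta2 t0 b (Suc (Suc k))
      = (1 - tau t0 (Suc k)) * (beta1 t0 b (Suc k) * beta2 t0 b (Suc k))"
    by (simp add: beta1_def beta2_def Let_def)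
  then show ?case using Suc r by simp
qed

lemma beta_pos:
  assumes "0 < t0" "t0 < 1" "0 < b"
  shows "0 < beta1 t0 b k \<and> 0 < beta2 t0 b k"
proof (induction k)
  case 0 then show ?case using assms by (simp add: beta1_def beta2_def)
next
  case (Suc k)
  have "1 - tau t0 k > 0" using tau_lt1 assms by (simp)
  then show ?case using Suc by (simp add: beta1_def beta2_def)
qed

lemma beta_ratio:
  assumes "0 < t0" "t0 < 1" "0 < b"
  shows "(even k \<longrightarrow> (1 - t0) * beta2 t0 b k \<le> (1 - tau t0 k) * beta1 t0 b k \<and> beta1 t0 b k \<le> beta2 t0 b k)
       \<and> (odd k \<longrightarrow> (1 - t0) * beta2 t0 b k \<le> beta1 t0 b k \<and> beta1 t0 b k \<le> (1 - tau t0 (k - 1)) * beta2 t0 b k)"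
proof (induction k)
  case 0 then show ?case by (simp add: beta1_def beta2_def)
next
  case (Suc k)
  have pos: "0 < beta1 t0 b k" "0 < beta2 t0 b k" using beta_pos assms by auto
  have tk: "0 < tau t0 k" "tau t0 k < 1" "tau t0 (Suc k) < tau t0 k" using tau_pos tau_lt1 tau_dec assms by auto
  show ?case
  proof (cases "even k")
    case True
    then have h: "(1 - t0) * beta2 t0 b k \<le> (1 - tau t0 k) * beta1 t0 b k" "beta1 t0 b k \<le> beta2 t0 b k"
      using Suc by auto
    have b1: "beta1 t0 b (Suc k) = (1 - tau t0 k) * beta1 t0 b k" "beta2 t0 b (Suc k) = beta2 t0 b k"
      using True by (simp_all add: beta1_def beta2_def)
    have "(1 - tau t0 k) * beta1 t0 b k \<le> (1 - tau t0 k) * beta2 t0 b k"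
      using h(2) tk by (intro mult_left_mono) auto
    then show ?thesis using True h b1 by simp
  next
    case False
    then have h: "(1 - t0) * beta2 t0 b k \<le> beta1 t0 b k" "beta1 t0 b k \<le> (1 - tau t0 (k - 1)) * beta2 t0 b k"
      using Suc by auto
    obtain m where km: "k = Suc m" using False by (cases k) auto
    have tm: "tau t0 k < tau t0 m" using tau_dec assms km by auto
    have b1: "beta1 t0 b (Suc k) = beta1 t0 b k" "beta2 t0 b (Suc k) = (1 - tau t0 k) * beta2 t0 b k"
      using False by (simp_all add: beta1_def beta2_def)
    have a1: "(1 - t0) * ((1 - tau t0 k) * beta2 t0 b k) \<le> (1 - tau t0 (Suc k)) * beta1 t0 b k"
    proof -
      have "(1 - t0) * ((1 - tau t0 k) * beta2 t0 b k) \<le> (1 - tau t0 k) * beta1 t0 b k"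
        using h(1) tk by (smt (verit) mult.left_commute mult_left_mono)
      also have "\<dots> \<le> (1 - tau t0 (Suc k)) * beta1 t0 b k"
        using tk pos by (intro mult_right_mono) auto
      finally show ?thesis .
    qed
    have a2: "beta1 t0 b k \<le> (1 - tau t0 k) * beta2 t0 b k"
    proof -
      have "beta1 t0 b k \<le> (1 - tau t0 m) * beta2 t0 b k" using h(2) km by simp
      also have "\<dots> \<le> (1 - tau t0 k) * beta2 t0 b k" using tm pos by (intro mult_right_mono) auto
      finally show ?thesis .
    qed
    show ?thesis using False a1 a2 b1 by simp
  qed
qed

lemma beta_cmp:
  assumes "0 < t0" "t0 < 1" "0 < b"
  shows "(1 - t0) * beta2 t0 b k \<le> beta1 t0 b k \<and> beta1 t0 b k \<le> beta2 t0 b k"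
proof -
  have pos: "0 < beta1 t0 b k" "0 < beta2 t0 b k" using beta_pos assms by auto
  have tk: "0 < tau t0 k" "tau t0 k < 1" using tau_pos tau_lt1 assms by auto
  have tk1: "0 < tau t0 (k-1)" using tau_pos assms by auto
  show ?thesis
  proof (cases "even k")
    case True
    then have "(1 - t0) * beta2 t0 b k \<le> (1 - tau t0 k) * beta1 t0 b k" "beta1 t0 b k \<le> beta2 t0 b k"
      using beta_ratio[OF assms, of k] by auto
    moreover have "(1 - tau t0 k) * beta1 t0 b k \<le> beta1 t0 b k" using tk pos by (simp add: mult_le_cancel_right1)
    ultimately show ?thesis by linarith
  next
    case False
    then have "(1 - t0) * beta2 t0 b k \<le> beta1 t0 b k" "beta1 t0 b k \<le> (1 - tau t0 (k-1)) * beta2 t0 b k"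
      using beta_ratio[OF assms, of k] by auto
    moreover have "(1 - tau t0 (k-1)) * beta2 t0 b k \<le> beta2 t0 b k" using tk1 pos by (simp add: mult_le_cancel_right1)
    ultimately show ?thesis by linarith
  qed
qed

theorem lemma7:
  fixes tau0 b :: real and k :: nat
  assumes "0 < tau0" and "tau0 < 1" and "0 < b" and "1 \<le> k"
  shows "(1 - tau0) * b / (2 * tau0 * real k + 1) < beta1 tau0 b k
       \<and> beta1 tau0 b k < 2 * b * sqrt (1 - tau0) / (tau0 * real k)
       \<and> b * sqrt (1 - tau0) / (2 * tau0 * real k + 1) < beta2 tau0 b k
       \<and> beta2 tau0 b k < 2 * b / (tau0 * real k)"
proof -
  obtain m where km: "k = Suc m" using assms(4) by (cases k) auto
  let ?t = "tau tau0 m"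
  let ?x = "beta1 tau0 b k" and ?y = "beta2 tau0 b k"
  have t0: "0 < ?t" using tau_pos assms by auto
  have rb: "1 / ?t \<ge> 1/tau0 + real m / 2" "1 / ?t \<le> 1/tau0 + real m"
    using recip_bounds[OF assms(1,2)] by auto
  have pos: "0 < ?x" "0 < ?y" using beta_pos assms by auto
  have cmp: "(1 - tau0) * ?y \<le> ?x" "?x \<le> ?y" using beta_cmp assms by auto
  define P where "P = b^2 * (1 - tau0) * ?t^2 / tau0^2"
  have xy: "?x * ?y = P" unfolding P_def km using prod_rel assms by blast
  define r where "r = sqrt (1 - tau0)"
  have r0: "0 < r" "r^2 = 1 - tau0" "r < 1" using assms unfolding r_def by (auto simp: real_sqrt_lt_1_iff)
  define Q where "Q = b * ?t / tau0"
  have Q0: "0 < Q" unfolding Q_def using assms t0 by simp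
  have PQ: "P = (r * Q)^2" unfolding P_def Q_def using r0 by (simp add: power_mult_distrib power_divide)
  have "?x * ?x \<le> ?x * ?y" using cmp pos by (intro mult_left_mono) auto
  then have x2u: "?x^2 \<le> (r*Q)^2" using xy PQ by (simp add: power2_eq_square)
  have "?x * ?y \<le> ?y * ?y" using cmp pos by (intro mult_right_mono) auto
  then have y2l: "?y^2 \<ge> (r*Q)^2" using xy PQ by (simp add: power2_eq_square)
  have "(r*Q)^2 * (1 - tau0) = ?x * ((1 - tau0) * ?y)" using xy PQ by (simp add: algebra_simps)
  also have "\<dots> \<le> ?x * ?x" using cmp pos by (intro mult_left_mono) auto
  finally have "(r*Q)^2 * (1 - tau0) \<le> ?x^2" by (simp add: power2_eq_square)
  moreover have "(r*r*Q)^2 = (r*Q)^2 * (r*r)" by (simp add: power2_eq_square algebra_simps)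
  moreover have "r*r = 1 - tau0" using r0 by (simp add: power2_eq_square)
  ultimately have x2l: "(r*r*Q)^2 \<le> ?x^2" by simp
  have "(r*?y)^2 = (1 - tau0) * ?y * ?y" unfolding power_mult_distrib r0(2) by (simp add: power2_eq_square)
  also have "\<dots> \<le> ?x * ?y" using cmp pos by (intro mult_right_mono) auto
  finally have y2u: "(r*?y)^2 \<le> (r*Q)^2" using xy PQ by simp
  have rQ: "0 \<le> r*Q" using r0 Q0 by simp
  have xu: "?x \<le> r*Q" by (rule power2_le_imp_le[OF x2u rQ])
  have xl: "r*r*Q \<le> ?x" by (rule power2_le_imp_le[OF x2l]) (use pos in simp)
  have yl: "r*Q \<le> ?y" by (rule power2_le_imp_le[OF y2l]) (use pos in simp)
  have yu0: "r*?y \<le> r*Q" by (rule power2_le_imp_le[OF y2u rQ])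
  have yu: "?y \<le> Q" using yu0 r0 by simp
  have k0: "real k > 0" using assms by simp
  have "1/?t > real k / 2" using rb(1) assms km
    by (smt (verit) less_divide_eq_1_pos of_nat_Suc field_sum_of_halves)
  then have "?t * real k < 2" using t0 by (simp add: field_simps)
  then have Qu: "Q < 2 * b / (tau0 * real k)" unfolding Q_def using assms k0
    by (simp add: field_simps)
  have "tau0 * (1/?t) \<le> tau0 * (1/tau0 + real m)" using rb(2) assms by (intro mult_left_mono) auto
  then have "tau0 / ?t \<le> 1 + tau0 * real m" using assms by (simp add: distrib_left)
  also have "\<dots> < 2 * tau0 * real k + 1" using assms km by simp
  finally have "tau0 < ?t * (2 * tau0 * real k + 1)" using t0 by (simp add: field_simps)
  then have "b * tau0 < b * (?t * (2 * tau0 * real k + 1))" using assms by (intro mult_strict_left_mono) auto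
  then have "b < Q * (2 * tau0 * real k + 1)" unfolding Q_def using assms by (simp add: field_simps)
  moreover have "0 < 2 * tau0 * real k + 1" using assms k0 by (simp add: add_pos_pos)
  ultimately have Ql: "b / (2 * tau0 * real k + 1) < Q" by (simp add: pos_divide_less_eq)
  have rr: "r * r = 1 - tau0" using r0 by (simp add: power2_eq_square)
  show ?thesis
  proof (intro conjI)
    have "(1 - tau0) * b / (2 * tau0 * real k + 1) = r*r * (b / (2 * tau0 * real k + 1))" using rr by simp
    also have "\<dots> < r*r*Q" using Ql r0 by (intro mult_strict_left_mono) auto
    finally show "(1 - tau0) * b / (2 * tau0 * real k + 1) < ?x" using xl by linarith
    have "r*Q < r * (2 * b / (tau0 * real k))" using Qu r0 by (intro mult_strict_left_mono) auto
    moreover have "r * (2 * b / (tau0 * real k)) = 2 * b * sqrt (1 - tau0) / (tau0 * real k)" unfolding r_def by simp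
    ultimately show "?x < 2 * b * sqrt (1 - tau0) / (tau0 * real k)" using xu by linarith
    have "r * (b / (2 * tau0 * real k + 1)) < r * Q" using Ql r0 by (intro mult_strict_left_mono) auto
    moreover have "r * (b / (2 * tau0 * real k + 1)) = b * sqrt (1 - tau0) / (2 * tau0 * real k + 1)" unfolding r_def by simp
    ultimately show "b * sqrt (1 - tau0) / (2 * tau0 * real k + 1) < ?y" using yl by linarith
    show "?y < 2 * b / (tau0 * real k)" using yu Qu by simp
  qed
qed

end
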